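(* Let $T$ be a tree and $c$ a caret of $T$, corresponding to the interval $I$. Then there is a tree $T'$, obtained from $T$ by attaching at most one new caret to a leaf and then performing a finite sequence of basic moves, in which the vertex corresponding to $I$ carries a caret of the type opposite to that of $c$ (i.e. $c$ can be switched from $x$-type to $y$-type or vice versa by adding at most one caret).
   Context: Let $\tau=(\sqrt5-1)/2$, so $\tau^2+\tau=1$. A tree is a finite rooted binary tree whose carets (non-leaf vertex with its two children) are each labelled $x$-type or $y$-type. Vertices correspond to subintervals of $[0,1]$: the root to $[0,1]$; if a vertex corresponds to $[p,p+\tau^k]$, an $x$-type caret there gives children $[p,p+\tau^{k+2}]$ (left) and $[p+\tau^{k+2},p+\tau^k]$ (right), and a $y$-type caret gives $[p,p+\tau^{k+1}]$ (left) and $[p+\tau^{k+1},p+\tau^k]$ (right). A basic move replaces, at some vertex of a tree, an $x$-type caret whose right child carries an $x$-type caret by a $y$-type caret whose left child carries a $y$-type caret (keeping the three subtrees hanging below, in the same left-to-right order), or performs the reverse replacement; both configurations subdivide an interval of length $\tau^k$ into consecutive intervals of lengths $\tau^{k+2},\tau^{k+3},\tau^{k+2}$, so a basic move does not change the subdivision into leaf intervals. *)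

theory Defs
  imports Complex_Main
begin

definition tau :: real where "tau = (sqrt 5 - 1) / 2"

datatype ctype = XT | YT

fun opp :: "ctype \<Rightarrow> ctype" where
  "opp XT = YT" | "opp YT = XT"

datatype tree = Leaf | Node ctype tree tree

text \<open>An interval [p, p + tau^k] is represented by the pair (p, k).
  child_int c b J: interval of the left (b = False) / right (b = True) child
  of a vertex with interval J carrying a caret of type c.\<close>
fun child_int :: "ctype \<Rightarrow> bool \<Rightarrow> real \<times> nat \<Rightarrow> real \<times> nat" where
  "child_int XT False (p, k) = (p, k + 2)"
| "child_int XT True (p, k) = (p + tau ^ (k + 2), k + 1)"
| "child_int YT False (p, k) = (p, k + 1)"
| "child_int YT True (p, k) = (p + tau ^ (k + 1), k + 2)"

fun carets :: "real \<times> nat \<Rightarrow> tree \<Rightarrow> ((real \<times> nat) \<times> ctype) set" where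
  "carets J Leaf = {}"
| "carets J (Node c l r) =
     insert (J, c) (carets (child_int c False J) l \<union> carets (child_int c True J) r)"

definition tree_carets :: "tree \<Rightarrow> ((real \<times> nat) \<times> ctype) set" where
  "tree_carets T = carets (0, 0) T"

inductive add_caret :: "tree \<Rightarrow> tree \<Rightarrow> bool" where
  leaf: "add_caret Leaf (Node c Leaf Leaf)"
| left: "add_caret l l' \<Longrightarrow> add_caret (Node c l r) (Node c l' r)"
| right: "add_caret r r' \<Longrightarrow> add_caret (Node c l r) (Node c l r')"

inductive basic_move :: "tree \<Rightarrow> tree \<Rightarrow> bool" where
  xy: "basic_move (Node XT a (Node XT b c)) (Node YT (Node YT a b) c)"
| yx: "basic_move (Node YT (Node YT a b) c) (Node XT a (Node XT b c))"
| left: "basic_move l l' \<Longrightarrow> basic_move (Node t l r) (Node t l' r)"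
| right: "basic_move r r' \<Longrightarrow> basic_move (Node t l r) (Node t l r')"

end

theory Submission
  imports Defs
begin

lemma mv_left: "basic_move\<^sup>*\<^sup>* l l' \<Longrightarrow> basic_move\<^sup>*\<^sup>* (Node t l r) (Node t l' r)"
  by (induction rule: rtranclp_induct) (auto intro: rtranclp.rtrancl_into_rtrancl basic_move.left)

lemma mv_right: "basic_move\<^sup>*\<^sup>* r r' \<Longrightarrow> basic_move\<^sup>*\<^sup>* (Node t l r) (Node t l r')"
  by (induction rule: rtranclp_induct) (auto intro: rtranclp.rtrancl_into_rtrancl basic_move.right)

lemma sw0: "S = Node c l r \<Longrightarrow> \<exists>S0 S'. (S0 = Node c l r \<or> add_caret (Node c l r) S0) \<and> basic_move\<^sup>*\<^sup>* S0 S'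
   \<and> (\<exists>l' r'. S' = Node (opp c) l' r')"
proof (induction S arbitrary: c l r)
  case (Node c0 l0 r0)
  then have e: "c0 = c" "l0 = l" "r0 = r" by auto
  note IH1 = Node.IH(1)[unfolded e] and IH2 = Node.IH(2)[unfolded e]
  show ?case
  proof (cases c)
    case XT
    show ?thesis
    proof (cases r)
      case Leaf
      have "add_caret (Node c l r) (Node XT l (Node XT Leaf Leaf))"
        using XT Leaf by (simp add: add_caret.right add_caret.leaf)
      moreover have "basic_move\<^sup>*\<^sup>* (Node XT l (Node XT Leaf Leaf)) (Node YT (Node YT l Leaf) Leaf)"
        by (simp add: r_into_rtranclp basic_move.xy)
      ultimately show ?thesis using XT by (intro exI[of _ "Node XT l (Node XT Leaf Leaf)"] exI[of _ "Node YT (Node YT l Leaf) Leaf"]) simp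
    next
      case (Node c2 b1 b2)
      show ?thesis
      proof (cases c2)
        case XT2: XT
        have "basic_move\<^sup>*\<^sup>* (Node c l r) (Node YT (Node YT l b1) b2)"
          using XT XT2 Node by (simp add: r_into_rtranclp basic_move.xy)
        then show ?thesis using XT by (intro exI[of _ "Node c l r"] exI[of _ "Node YT (Node YT l b1) b2"]) simp
      next
        case YT2: YT
        from IH2[of c2 b1 b2] Node obtain b0 b' l' r' where
          h: "b0 = r \<or> add_caret r b0" "basic_move\<^sup>*\<^sup>* b0 b'" "b' = Node XT l' r'"
          using YT2 by auto
        have "basic_move\<^sup>*\<^sup>* (Node XT l b0) (Node XT l b')" using h mv_right by blast
        also have "basic_move (Node XT l b') (Node YT (Node YT l l') r')"
          using h by (simp add: r_into_rtranclp basic_move.xy)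
        finally have m: "basic_move\<^sup>*\<^sup>* (Node XT l b0) (Node YT (Node YT l l') r')" .
        have "Node XT l b0 = Node c l r \<or> add_caret (Node c l r) (Node XT l b0)"
          using h XT add_caret.right by blast
        then show ?thesis using m XT by (intro exI[of _ "Node XT l b0"] exI[of _ "Node YT (Node YT l l') r'"]) simp
      qed
    qed
  next
    case YT
    show ?thesis
    proof (cases l)
      case Leaf
      have "add_caret (Node c l r) (Node YT (Node YT Leaf Leaf) r)"
        using YT Leaf by (simp add: add_caret.left add_caret.leaf)
      moreover have "basic_move\<^sup>*\<^sup>* (Node YT (Node YT Leaf Leaf) r) (Node XT Leaf (Node XT Leaf r))"
        by (simp add: r_into_rtranclp basic_move.yx)
      ultimately show ?thesis using YT by (intro exI[of _ "Node YT (Node YT Leaf Leaf) r"] exI[of _ "Node XT Leaf (Node XT Leaf r)"]) simp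
    next
      case (Node c2 b1 b2)
      show ?thesis
      proof (cases c2)
        case YT2: YT
        have "basic_move\<^sup>*\<^sup>* (Node c l r) (Node XT b1 (Node XT b2 r))"
          using YT YT2 Node by (simp add: r_into_rtranclp basic_move.yx)
        then show ?thesis using YT by (intro exI[of _ "Node c l r"] exI[of _ "Node XT b1 (Node XT b2 r)"]) simp
      next
        case XT2: XT
        from IH1[of c2 b1 b2] Node obtain b0 b' l' r' where
          h: "b0 = l \<or> add_caret l b0" "basic_move\<^sup>*\<^sup>* b0 b'" "b' = Node YT l' r'"
          using XT2 by auto
        have "basic_move\<^sup>*\<^sup>* (Node YT b0 r) (Node YT b' r)" using h mv_left by blast
        also have "basic_move (Node YT b' r) (Node XT l' (Node XT r' r))"
          using h by (simp add: r_into_rtranclp basic_move.yx)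
        finally have m: "basic_move\<^sup>*\<^sup>* (Node YT b0 r) (Node XT l' (Node XT r' r))" .
        have "Node YT b0 r = Node c l r \<or> add_caret (Node c l r) (Node YT b0 r)"
          using h YT add_caret.left by blast
        then show ?thesis using m YT by (intro exI[of _ "Node YT b0 r"] exI[of _ "Node XT l' (Node XT r' r)"]) simp
      qed
    qed
  qed
qed simp

lemmas sw = sw0[OF refl]

lemma gen: "(I, c) \<in> carets K T \<Longrightarrow> \<exists>T0 T'. (T0 = T \<or> add_caret T T0) \<and> basic_move\<^sup>*\<^sup>* T0 T'
                \<and> (I, opp c) \<in> carets K T'"
proof (induction T arbitrary: K)
  case Leaf
  then show ?case by simp
next
  case (Node c' l r)
  consider "(I, c) = (K, c')" | "(I, c) \<in> carets (child_int c' False K) l"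
    | "(I, c) \<in> carets (child_int c' True K) r" using Node.prems unfolding carets.simps by blast
  then show ?case
  proof cases
    case 1
    obtain S0 S' l' r' where "S0 = Node c' l r \<or> add_caret (Node c' l r) S0" "basic_move\<^sup>*\<^sup>* S0 S'"
      "S' = Node (opp c') l' r'" using sw[of c' l r] by blast
    moreover have "(I, opp c) \<in> carets K S'" using 1 \<open>S' = Node (opp c') l' r'\<close> by simp
    ultimately show ?thesis by blast
  next
    case 2
    from Node.IH(1)[OF 2] obtain T0 T' where h: "T0 = l \<or> add_caret l T0" "basic_move\<^sup>*\<^sup>* T0 T'"
      "(I, opp c) \<in> carets (child_int c' False K) T'" by blast
    have "Node c' T0 r = Node c' l r \<or> add_caret (Node c' l r) (Node c' T0 r)"
      using h add_caret.left by blast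
    moreover have "basic_move\<^sup>*\<^sup>* (Node c' T0 r) (Node c' T' r)" using h mv_left by blast
    moreover have "(I, opp c) \<in> carets K (Node c' T' r)" using h by simp
    ultimately show ?thesis by blast
  next
    case 3
    from Node.IH(2)[OF 3] obtain T0 T' where h: "T0 = r \<or> add_caret r T0" "basic_move\<^sup>*\<^sup>* T0 T'"
      "(I, opp c) \<in> carets (child_int c' True K) T'" by blast
    have "Node c' l T0 = Node c' l r \<or> add_caret (Node c' l r) (Node c' l T0)"
      using h add_caret.right by blast
    moreover have "basic_move\<^sup>*\<^sup>* (Node c' l T0) (Node c' l T')" using h mv_right by blast
    moreover have "(I, opp c) \<in> carets K (Node c' l T')" using h by simp
    ultimately show ?thesis by blast
  qed
qed

theorem mainTheorem14:
  fixes T :: tree and I :: "real \<times> nat" and c :: ctype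
  assumes "(I, c) \<in> tree_carets T"
  shows "\<exists>T0 T'. (T0 = T \<or> add_caret T T0) \<and> basic_move\<^sup>*\<^sup>* T0 T'
                \<and> (I, opp c) \<in> tree_carets T'"
  using gen assms unfolding tree_carets_def by blast

end
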